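(* The set of points of exact period $2$ under $G$ lies on the line $u=-1$, and the Zariski closure in $\mathbb{C}^2$ of this set is the line $u=-1$ (the equation of period two orbits on the $(u,v)$-plane is $u=-1$).
   Context: Let \[ G(u,v)=\left(\frac{-u+v+uv}{u},\ \frac{u^{2}-u+v-u^{2}v-uv+uv^{2}+v^{2}}{u}\right), \] defined for $(u,v)\in\mathbb{C}^2$ with $u\neq 0$. A point $(u,v)$ has exact period $n$ under $G$ if the iterates $G^k(u,v)$, $0\le k\le n-1$, all have nonzero first coordinate, $G^n(u,v)=(u,v)$, and $G^k(u,v)\neq(u,v)$ for $0<k<n$. *)

theory Defs
  imports Complex_Main "HOL-Computational_Algebra.Polynomial"
begin

definition G :: "complex \<times> complex \<Rightarrow> complex \<times> complex" where
  "G = (\<lambda>(u, v). ((- u + v + u * v) / u,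
        (u^2 - u + v - u^2 * v - u * v + u * v^2 + v^2) / u))"

definition exact_period :: "nat \<Rightarrow> complex \<times> complex \<Rightarrow> bool" where
  "exact_period n p \<longleftrightarrow>
     (\<forall>k<n. fst ((G ^^ k) p) \<noteq> 0) \<and> (G ^^ n) p = p \<and>
     (\<forall>k. 0 < k \<and> k < n \<longrightarrow> (G ^^ k) p \<noteq> p)"

text \<open>Bivariate complex polynomials are represented as polynomials in u whose
  coefficients are polynomials in v; evaluation at (u,v).\<close>
definition eval2 :: "complex poly poly \<Rightarrow> complex \<times> complex \<Rightarrow> complex" where
  "eval2 f z = poly (poly (map_poly (\<lambda>c. [:poly c (snd z):]) f) [:fst z:]) 0"

definition zariski_closure :: "(complex \<times> complex) set \<Rightarrow> (complex \<times> complex) set" where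
  "zariski_closure S = {z. \<forall>f. (\<forall>w\<in>S. eval2 f w = 0) \<longrightarrow> eval2 f z = 0}"

end

theory Submission
  imports Defs
begin

lemma eval2_poly: "eval2 f (x, y) = poly (poly f [:x:]) y"
proof (induction f)
  case 0
  then show ?case by (simp add: eval2_def)
next
  case (pCons a p)
  have "eval2 (pCons a p) (x, y) = poly a y + x * eval2 p (x, y)"
    by (simp add: eval2_def map_poly_pCons poly_0_coeff_0)
  then show ?case using pCons by (simp add: algebra_simps)
qed

lemma key:
  fixes u v a b :: complex
  assumes u0: "u \<noteq> 0" and a0: "a \<noteq> 0"
    and e1: "a * u = - u + v + u * v"
    and e2: "b * u = u^2 - u + v - u^2 * v - u * v + u * v^2 + v^2"
    and e3: "- a + b + a * b = u * a"
    and e4: "a^2 - a + b - a^2 * b - a * b + a * b^2 + b^2 = v * a"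
    and ne: "(a, b) \<noteq> (u, v)"
  shows "u = -1"
proof (rule ccontr)
  assume s: "u \<noteq> -1"
  hence s': "u + 1 \<noteq> 0" by (metis add_eq_0_iff2)
  have "b * v * (u+1) = (v * (u+1) - u) * (u+1)" using e1 e3 u0 by algebra
  hence bv: "b * v = v * (u+1) - u" using s' by simp
  have "(v - u) * (v + 1) * ((u+1) * v - u) = 0" using bv e2 by algebra
  then consider "v = u" | "v = -1" | "(u+1) * v = u" by (metis add_eq_0_iff2 mult_eq_0_iff eq_iff_diff_eq_0)
  then show False
  proof cases
    case 1
    have "a * u = u * u" using e1 1 by algebra
    hence "a = u" using u0 by simp
    moreover have "b * u = u * u" using e2 1 by algebra
    hence "b = u" using u0 by simp
    ultimately show False using ne 1 by simp
  next
    case 2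
    have "b * u = (1 + 2*u) * u" using e2 2 by algebra
    hence bb: "b = 1 + 2*u" using u0 by simp
    have "(u+1)^2 * (2*u+1) = 0" using e1 e4 bb 2 by algebra
    moreover have "2*u+1 \<noteq> 0" using e1 2 a0 u0 by algebra
    ultimately show False using s' by simp
  next
    case 3
    have "a * u = 0" using e1 3 by algebra
    then show False using a0 u0 by simp
  qed
qed


lemma ep2: "exact_period 2 p \<longleftrightarrow> fst p \<noteq> 0 \<and> fst (G p) \<noteq> 0 \<and> G (G p) = p \<and> G p \<noteq> p"
proof -
  have a: "(\<forall>k<(2::nat). P k) \<longleftrightarrow> P 0 \<and> P 1" for P
    by (auto simp: less_2_cases_iff)
  have b: "(\<forall>k. 0 < k \<and> k < (2::nat) \<longrightarrow> Q k) \<longleftrightarrow> Q 1" for Q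
    using less_2_cases_iff by auto
  show ?thesis unfolding exact_period_def a b by (simp add: numeral_2_eq_2)
qed

lemma per2_line:
  assumes "exact_period 2 p" shows "fst p = -1"
proof -
  obtain u v where p: "p = (u, v)" by fastforce
  obtain a b where g: "G (u, v) = (a, b)" by fastforce
  have h: "u \<noteq> 0" "a \<noteq> 0" "G (a, b) = (u, v)" "(a, b) \<noteq> (u, v)"
    using assms unfolding ep2 p g by auto
  have e1: "a = (- u + v + u * v) / u" and e2: "b = (u^2 - u + v - u^2 * v - u * v + u * v^2 + v^2) / u"
    using g by (auto simp: G_def)
  have e3: "(- a + b + a * b) / a = u" and e4: "(a^2 - a + b - a^2 * b - a * b + a * b^2 + b^2) / a = v"
    using h(3) by (auto simp: G_def)
  show ?thesis unfolding p fst_conv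
  proof (rule key[OF h(1) h(2) _ _ _ _ h(4)])
    show "a * u = - u + v + u * v" using e1 h(1) by (simp add: field_simps)
    show "b * u = u^2 - u + v - u^2 * v - u * v + u * v^2 + v^2" using e2 h(1) by (simp add: field_simps)
    show "- a + b + a * b = u * a" using e3 h(2) by (simp add: field_simps)
    show "a^2 - a + b - a^2 * b - a * b + a * b^2 + b^2 = v * a" using e4 h(2) by (simp add: field_simps)
  qed
qed

lemma line_per2:
  assumes "v \<noteq> -1" shows "exact_period 2 (-1, v)"
proof -
  have g1: "G (-1, v) = (-1, -2 - v)" by (simp add: G_def power2_eq_square algebra_simps)
  have g2: "G (-1, -2 - v) = (-1, v)" by (simp add: G_def power2_eq_square algebra_simps)
  have "-2 - v \<noteq> v" using assms by (auto simp: algebra_simps)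
  then show ?thesis unfolding ep2 g1 g2 by simp
qed

theorem mainTheorem4:
  shows "{p. exact_period 2 p} \<subseteq> {p. fst p = -1} \<and>
         zariski_closure {p. exact_period 2 p} = {p. fst p = -1}"
proof (intro conjI)
  show sub: "{p. exact_period 2 p} \<subseteq> {p. fst p = -1}" using per2_line by blast
  show "zariski_closure {p. exact_period 2 p} = {p. fst p = -1}"
  proof (intro equalityI subsetI)
    fix z assume z: "z \<in> zariski_closure {p. exact_period 2 p}"
    define f :: "complex poly poly" where "f = [:[:1:], [:1:]:]"
    have ev: "eval2 f w = 1 + fst w" for w
      using eval2_poly[of f "fst w" "snd w"] by (simp add: f_def)
    have "\<forall>w\<in>{p. exact_period 2 p}. eval2 f w = 0" using per2_line ev by simp
    hence "eval2 f z = 0" using z unfolding zariski_closure_def by blast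
    then show "z \<in> {p. fst p = -1}" using ev[of z] by (simp add: add_eq_0_iff)
  next
    fix z :: "complex \<times> complex" assume "z \<in> {p. fst p = -1}"
    then obtain y where zy: "z = (-1, y)" by (cases z) auto
    show "z \<in> zariski_closure {p. exact_period 2 p}"
      unfolding zariski_closure_def
    proof (intro CollectI allI impI)
      fix f assume hf: "\<forall>w\<in>{p. exact_period 2 p}. eval2 f w = 0"
      define Q where "Q = poly f [:-1:]"
      have r: "poly Q v = 0" if "v \<noteq> -1" for v
        using hf line_per2[OF that] eval2_poly[of f "-1" v] by (simp add: Q_def)
      have "Q = 0"
      proof (rule ccontr)
        assume "Q \<noteq> 0"
        hence "finite {v. poly Q v = 0}" by (rule poly_roots_finite)
        moreover have "- {-1} \<subseteq> {v. poly Q v = 0}" using r by auto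
        ultimately have "finite (- {-1::complex})" by (rule rev_finite_subset)
        thus False by (simp add: infinite_UNIV_char_0 Compl_eq_Diff_UNIV)
      qed
      then show "eval2 f z = 0" using eval2_poly[of f "-1" y] zy by (simp add: Q_def)
    qed
  qed
qed

end
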